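(* Let $h,w\ge 4$ and $G=C_w(U)\sqcap C_h$ with $U=\{i\}$ for some $i\in\{1,\dots,w\}$. Then $Z(G)\le h+2$.
   Context: All graphs are finite, simple and undirected. Zero forcing: given a graph $G$ and a set $S\subseteq V(G)$ of initially filled vertices, the color change rule says that if a filled vertex $v$ has exactly one unfilled neighbor $u$, then $v$ forces $u$ to become filled. $S$ is a zero forcing set if repeatedly applying this rule eventually fills every vertex of $G$. The zero forcing number $Z(G)$ is the minimum cardinality of a zero forcing set of $G$. The cycle $C_n$ ($n\ge3$) has vertex set $\{1,\dots,n\}$ and edges $\{k,k+1\}$ for $1\le k\le n-1$ together with $\{n,1\}$. Generalized hierarchical product: for graphs $W,H$ and $U\subseteq V(W)$ (the root set), $W(U)\sqcap H$ is the graph with vertex set $V(W)\times V(H)$ in which $(x_1,y_1)$ and $(x_2,y_2)$ are adjacent iff either ($x_1=x_2\in U$ and $y_1y_2\in E(H)$) or ($y_1=y_2$ and $x_1x_2\in E(W)$). *)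

theory Defs
  imports Main
begin

text \<open>A finite simple graph is represented by a vertex set V and a symmetric,
irreflexive adjacency predicate E (only its restriction to V matters).\<close>

definition cycle_adj :: "nat \<Rightarrow> nat \<Rightarrow> nat \<Rightarrow> bool" where
  "cycle_adj n a b \<longleftrightarrow> a \<in> {1..n} \<and> b \<in> {1..n} \<and>
     (b = a + 1 \<or> a = b + 1 \<or> (a = n \<and> b = 1) \<or> (a = 1 \<and> b = n))"

definition cycle_verts :: "nat \<Rightarrow> nat set" where
  "cycle_verts n = {1..n}"

definition hprod_verts :: "'a set \<Rightarrow> 'b set \<Rightarrow> ('a \<times> 'b) set" where
  "hprod_verts VW VH = VW \<times> VH"

definition hprod_adj :: "('a \<Rightarrow> 'a \<Rightarrow> bool) \<Rightarrow> 'a set \<Rightarrow> ('b \<Rightarrow> 'b \<Rightarrow> bool)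
    \<Rightarrow> ('a \<times> 'b) \<Rightarrow> ('a \<times> 'b) \<Rightarrow> bool" where
  "hprod_adj EW U EH p q \<longleftrightarrow>
     (fst p = fst q \<and> fst p \<in> U \<and> EH (snd p) (snd q)) \<or>
     (snd p = snd q \<and> EW (fst p) (fst q))"

definition force_step :: "'v set \<Rightarrow> ('v \<Rightarrow> 'v \<Rightarrow> bool) \<Rightarrow> 'v set \<Rightarrow> 'v set \<Rightarrow> bool" where
  "force_step V E F F' \<longleftrightarrow>
     (\<exists>v\<in>F. \<exists>u. {w \<in> V. E v w \<and> w \<notin> F} = {u} \<and> F' = insert u F)"

definition zero_forcing_set :: "'v set \<Rightarrow> ('v \<Rightarrow> 'v \<Rightarrow> bool) \<Rightarrow> 'v set \<Rightarrow> bool" where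
  "zero_forcing_set V E S \<longleftrightarrow> S \<subseteq> V \<and> (\<exists>F. (force_step V E)\<^sup>*\<^sup>* S F \<and> V \<subseteq> F)"

definition zero_forcing_number :: "'v set \<Rightarrow> ('v \<Rightarrow> 'v \<Rightarrow> bool) \<Rightarrow> nat" where
  "zero_forcing_number V E = (LEAST k. \<exists>S. zero_forcing_set V E S \<and> card S = k)"

end

theory Submission imports Defs begin

definition reach :: "'v set \<Rightarrow> ('v \<Rightarrow> 'v \<Rightarrow> bool) \<Rightarrow> 'v set \<Rightarrow> 'v set \<Rightarrow> bool" where
  "reach V E S A \<longleftrightarrow> (\<exists>F. (force_step V E)\<^sup>*\<^sup>* S F \<and> A \<subseteq> F)"

lemma reach_init: "reach V E S S" unfolding reach_def by blast

lemma reach_force: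
  assumes "reach V E S A" "v \<in> A" "u \<in> V" "E v u" "\<forall>x\<in>V. E v x \<longrightarrow> x = u \<or> x \<in> A"
  shows "reach V E S (insert u A)"
proof -
  obtain F where F: "(force_step V E)\<^sup>*\<^sup>* S F" "A \<subseteq> F" using assms(1) unfolding reach_def by blast
  show ?thesis
  proof (cases "u \<in> F")
    case True then show ?thesis using F unfolding reach_def by blast
  next
    case False
    have "{x \<in> V. E v x \<and> x \<notin> F} = {u}" using assms F False by blast
    then have "force_step V E F (insert u F)" unfolding force_step_def using assms F by blast
    then have "(force_step V E)\<^sup>*\<^sup>* S (insert u F)" using F by (meson rtranclp.rtrancl_into_rtrancl)
    then show ?thesis using F unfolding reach_def by blast
  qed
qed

lemma reach_mono: "reach V E S A \<Longrightarrow> B \<subseteq> A \<Longrightarrow> reach V E S B"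
  unfolding reach_def by blast

lemma path_prop:
  assumes R: "reach V E S A" and p0: "p 0 \<in> A" and p1: "p 1 \<in> A"
    and H: "\<And>k. 1 \<le> k \<Longrightarrow> k < M \<Longrightarrow> p (Suc k) \<in> V \<and> E (p k) (p (Suc k)) \<and>
              (\<forall>x\<in>V. E (p k) x \<longrightarrow> x = p (Suc k) \<or> x = p (k - 1))"
  shows "1 \<le> m \<Longrightarrow> m \<le> M \<Longrightarrow> reach V E S (A \<union> p ` {..m})"
proof (induction m)
  case 0 then show ?case by simp
next
  case (Suc m)
  show ?case
  proof (cases "m = 0")
    case True
    have "A \<union> p ` {..Suc m} = A" using True p0 p1 by (auto simp: le_Suc_eq)
    then show ?thesis using R by simp
  next
    case False
    then have IH: "reach V E S (A \<union> p ` {..m})" using Suc by simp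
    have h: "p (Suc m) \<in> V \<and> E (p m) (p (Suc m)) \<and>
              (\<forall>x\<in>V. E (p m) x \<longrightarrow> x = p (Suc m) \<or> x = p (m - 1))"
      using H[of m] False Suc by simp
    have "reach V E S (insert (p (Suc m)) (A \<union> p ` {..m}))"
      apply (rule reach_force[OF IH, of "p m"])
      using h by auto
    moreover have "insert (p (Suc m)) (A \<union> p ` {..m}) = A \<union> p ` {..Suc m}"
      by (auto simp: atMost_Suc)
    ultimately show ?thesis by simp
  qed
qed

definition rot :: "nat \<Rightarrow> nat \<Rightarrow> nat \<Rightarrow> nat" where
  "rot w i k = (i - 1 + k) mod w + 1"

lemma rot_in: "w > 0 \<Longrightarrow> rot w i k \<in> {1..w}"
  unfolding rot_def by (auto simp: Suc_le_eq)

lemma rot_0: "i \<in> {1..w} \<Longrightarrow> rot w i 0 = i"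
  unfolding rot_def by auto

lemma rot_Suc: "w > 0 \<Longrightarrow> rot w i (Suc k) = (if rot w i k = w then 1 else rot w i k + 1)"
  unfolding rot_def by (simp add: mod_Suc)

lemma rot_adj: "w \<ge> 3 \<Longrightarrow> cycle_adj w (rot w i k) (rot w i (Suc k))"
  using rot_in[of w i k] rot_in[of w i "Suc k"] rot_Suc[of w i k]
  unfolding cycle_adj_def by auto

lemma rot_nbr: "w \<ge> 3 \<Longrightarrow> cycle_adj w (rot w i (Suc j)) z \<Longrightarrow> z = rot w i (Suc (Suc j)) \<or> z = rot w i j"
  using rot_in[of w i j] rot_Suc[of w i j] rot_Suc[of w i "Suc j"]
  unfolding cycle_adj_def by auto

lemma rot_ne: assumes "i \<in> {1..w}" "1 \<le> k" "k < w" shows "rot w i k \<noteq> i"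
proof -
  have "(i - 1 + k) mod w \<noteq> i - 1"
  proof (cases "i - 1 + k < w")
    case True then show ?thesis using assms by (simp, arith)
  next
    case False
    have lt: "i - 1 + k - w < w" using assms by auto
    have "(i - 1 + k) mod w = (i - 1 + k - w) mod w" using False by (simp add: le_mod_geq)
    then have "(i - 1 + k) mod w = i - 1 + k - w" using lt by simp
    then show ?thesis using assms False by simp
  qed
  then show ?thesis unfolding rot_def using assms by auto
qed

lemma rot_surj: assumes "i \<in> {1..w}" "z \<in> {1..w}" shows "\<exists>k\<le>w-1. rot w i k = z"
proof (cases "z \<ge> i")
  case True
  then show ?thesis using assms by (intro exI[of _ "z - i"]) (auto simp: rot_def)
next
  case False
  have "(i - 1 + (z + w - i)) mod w = (z - 1 + w) mod w" using False assms by (simp add: algebra_simps)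
  also have "\<dots> = (z - 1) mod w" by (metis mod_add_self2)
  also have "\<dots> = z - 1" using assms by (intro mod_less) auto
  finally have e: "(i - 1 + (z + w - i)) mod w = z - 1" .
  show ?thesis
  proof (intro exI[of _ "z + w - i"] conjI)
    show "z + w - i \<le> w - 1" using False assms by simp
    show "rot w i (z + w - i) = z" unfolding rot_def using e assms by simp
  qed
qed


lemma row_fill:
  fixes h w i y :: nat
  defines "V \<equiv> hprod_verts (cycle_verts w) (cycle_verts h)"
    and "E \<equiv> hprod_adj (cycle_adj w) {i} (cycle_adj h)"
  assumes w: "w \<ge> 3" and i: "i \<in> {1..w}" and y: "y \<in> {1..h}"
    and R: "reach V E S A" and a0: "(i, y) \<in> A" and a1: "(rot w i 1, y) \<in> A"
  shows "reach V E S (A \<union> {1..w} \<times> {y})"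
proof -
  define p where "p k = (rot w i k, y)" for k
  have "reach V E S (A \<union> p ` {..w-1})"
  proof (rule path_prop[where M = "w - 1"])
    show "reach V E S A" by fact
    show "p 0 \<in> A" using a0 rot_0[OF i] by (simp add: p_def)
    show "p 1 \<in> A" using a1 by (simp add: p_def)
    show "1 \<le> w - 1" "w - 1 \<le> w - 1" using w by auto
  next
    fix k assume k: "1 \<le> k" "k < w - 1"
    then obtain j where j: "k = Suc j" by (cases k) auto
    have in1: "p (Suc k) \<in> V" using rot_in[of w i "Suc k"] w y
      by (simp add: p_def V_def hprod_verts_def cycle_verts_def)
    have e1: "E (p k) (p (Suc k))" using rot_adj[OF w, of i k]
      by (simp add: p_def E_def hprod_adj_def)
    have ne: "rot w i k \<noteq> i" using rot_ne[OF i, of k] k by simp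
    have "\<forall>x\<in>V. E (p k) x \<longrightarrow> x = p (Suc k) \<or> x = p (k - 1)"
    proof (intro ballI impI)
      fix x assume "x \<in> V" "E (p k) x"
      then have "snd x = y \<and> cycle_adj w (rot w i (Suc j)) (fst x)"
        using ne j by (auto simp: p_def E_def hprod_adj_def)
      then show "x = p (Suc k) \<or> x = p (k - 1)"
        using rot_nbr[OF w, of i j "fst x"] j by (cases x) (auto simp: p_def)
    qed
    then show "p (Suc k) \<in> V \<and> E (p k) (p (Suc k)) \<and>
              (\<forall>x\<in>V. E (p k) x \<longrightarrow> x = p (Suc k) \<or> x = p (k - 1))"
      using in1 e1 by blast
  qed
  moreover have "p ` {..w-1} = {1..w} \<times> {y}"
  proof
    show "p ` {..w-1} \<subseteq> {1..w} \<times> {y}" using rot_in[of w i] w by (auto simp: p_def)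
    show "{1..w} \<times> {y} \<subseteq> p ` {..w-1}"
    proof
      fix x assume "x \<in> {1..w} \<times> {y}"
      then obtain z where z: "x = (z, y)" "z \<in> {1..w}" by auto
      obtain k where "k \<le> w - 1" "rot w i k = z" using rot_surj[OF i z(2)] by blast
      then show "x \<in> p ` {..w-1}" using z by (auto simp: p_def)
    qed
  qed
  ultimately show ?thesis by simp
qed

lemma col_fill:
  fixes h w i :: nat
  defines "V \<equiv> hprod_verts (cycle_verts w) (cycle_verts h)"
    and "E \<equiv> hprod_adj (cycle_adj w) {i} (cycle_adj h)"
    and "S \<equiv> (\<lambda>y. (rot w i 1, y)) ` {1..h} \<union> {(i, 1), (i, 2)}"
  assumes h: "h \<ge> 4" and w: "w \<ge> 4" and i: "i \<in> {1..w}"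
  shows "2 \<le> y \<Longrightarrow> y \<le> h \<Longrightarrow> reach V E S (S \<union> {1..w} \<times> {1..y})"
proof (induction y)
  case 0 then show ?case by simp
next
  case (Suc y)
  have w3: "w \<ge> 3" using w by simp
  show ?case
  proof (cases "y = 1")
    case True
    have r1: "reach V E S (S \<union> {1..w} \<times> {1})"
      unfolding V_def E_def
      by (rule row_fill[OF w3 i]) (use h in \<open>auto simp: S_def reach_init[unfolded V_def E_def S_def]\<close>)
    have r2: "reach V E S ((S \<union> {1..w} \<times> {1}) \<union> {1..w} \<times> {2})"
      unfolding V_def E_def
      by (rule row_fill[OF w3 i]) (use h r1 in \<open>auto simp: S_def V_def E_def\<close>)
    have "(S \<union> {1..w} \<times> {1}) \<union> {1..w} \<times> {2} = S \<union> {1..w} \<times> {1..Suc y}"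
      using True by auto
    then show ?thesis using r2 by simp
  next
    case False
    then have y2: "2 \<le> y" "Suc y \<le> h" using Suc by auto
    define A where "A = S \<union> {1..w} \<times> {1..y}"
    have IH: "reach V E S A" using Suc y2 by (simp add: A_def)
    have f: "reach V E S (insert (i, Suc y) A)"
    proof (rule reach_force[OF IH, of "(i, y)"])
      show "(i, y) \<in> A" using i y2 by (auto simp: A_def)
      show "(i, Suc y) \<in> V" using i y2 by (auto simp: V_def hprod_verts_def cycle_verts_def)
      show "E (i, y) (i, Suc y)" using y2 by (auto simp: E_def hprod_adj_def cycle_adj_def)
      show "\<forall>x\<in>V. E (i, y) x \<longrightarrow> x = (i, Suc y) \<or> x \<in> A"
      proof (intro ballI impI)
        fix x assume xV: "x \<in> V" and ex: "E (i, y) x"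
        obtain a b where x: "x = (a, b)" by (cases x)
        have ab: "a \<in> {1..w}" "b \<in> {1..h}" using xV x by (auto simp: V_def hprod_verts_def cycle_verts_def)
        from ex x have "(a = i \<and> cycle_adj h y b) \<or> (b = y \<and> cycle_adj w i a)"
          by (auto simp: E_def hprod_adj_def)
        then show "x = (i, Suc y) \<or> x \<in> A"
        proof
          assume "a = i \<and> cycle_adj h y b"
          then have "a = i" "b = Suc y \<or> Suc b = y" using y2 by (auto simp: cycle_adj_def)
          then show ?thesis using x ab y2 by (auto simp: A_def)
        next
          assume "b = y \<and> cycle_adj w i a"
          then show ?thesis using x ab y2 by (auto simp: A_def)
        qed
      qed
    qed
    have r: "reach V E S (insert (i, Suc y) A \<union> {1..w} \<times> {Suc y})"
      unfolding V_def E_def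
      by (rule row_fill[OF w3 i]) (use y2 f in \<open>auto simp: S_def V_def E_def A_def\<close>)
    have "insert (i, Suc y) A \<union> {1..w} \<times> {Suc y} = S \<union> {1..w} \<times> {1..Suc y}"
      using i by (auto simp: A_def)
    then show ?thesis using r by simp
  qed
qed

theorem mainTheorem4:
  fixes h w i :: nat
  assumes "h \<ge> 4" and "w \<ge> 4" and "i \<in> {1..w}"
  shows "zero_forcing_number
           (hprod_verts (cycle_verts w) (cycle_verts h))
           (hprod_adj (cycle_adj w) {i} (cycle_adj h)) \<le> h + 2"
proof -
  define V where "V = hprod_verts (cycle_verts w) (cycle_verts h)"
  define E where "E = hprod_adj (cycle_adj w) {i} (cycle_adj h)"
  define S where "S = (\<lambda>y. (rot w i 1, y)) ` {1..h} \<union> {(i, 1), (i, 2)}"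
  have r: "reach V E S (S \<union> {1..w} \<times> {1..h})"
    using col_fill[OF assms, of h] assms unfolding V_def E_def S_def by simp
  have ne: "rot w i 1 \<noteq> i" using rot_ne[OF assms(3), of 1] assms by simp
  have SV: "S \<subseteq> V" using assms rot_in[of w i 1]
    by (auto simp: S_def V_def hprod_verts_def cycle_verts_def)
  have VV: "V = {1..w} \<times> {1..h}" by (simp add: V_def hprod_verts_def cycle_verts_def)
  have zf: "zero_forcing_set V E S"
    using r SV unfolding zero_forcing_set_def reach_def VV by blast
  have c1: "card ((\<lambda>y. (rot w i 1, y)) ` {1..h}) = h"
    by (subst card_image) (auto simp: inj_on_def)
  have "card S = h + 2"
    unfolding S_def using c1 ne by (auto simp add: card_insert_if)
  then have "zero_forcing_set V E S \<and> card S = h + 2" using zf by simp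
  then show ?thesis unfolding zero_forcing_number_def V_def[symmetric] E_def[symmetric]
    by (intro Least_le) blast
qed

end
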